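(* Let $\lambda_1,\lambda_2>0$ and $\nu\in(0,1)$. Define, for $\theta\in\mathbb{R}$, $$\Psi^{(1)}_{\nu,\underline{\lambda}}(\theta):=\begin{cases}(\lambda_1(e^\theta-1))^{1/\nu} & \text{if } \theta\geq0,\\ (\lambda_2(e^{-\theta}-1))^{1/\nu} & \text{if } \theta<0,\end{cases}$$ $$\Psi^{(2)}_{\nu,\underline{\lambda}}(\theta):=\begin{cases}(\lambda_1(e^\theta-1)+\lambda_2(e^{-\theta}-1))^{1/\nu} & \text{if } \lambda_1(e^\theta-1)+\lambda_2(e^{-\theta}-1)\geq0,\\ 0 & \text{otherwise},\end{cases}$$ and for $k\in\{1,2\}$ let $I^{(k)}_{\mathrm{LD}}(x):=\sup_{\theta\in\mathbb{R}}\{\theta x-\Psi^{(k)}_{\nu,\underline{\lambda}}(\theta)\}$. Then $I^{(1)}_{\mathrm{LD}}(0)=I^{(2)}_{\mathrm{LD}}(0)=0$ and, for every $x\neq0$, $I^{(2)}_{\mathrm{LD}}(x)>I^{(1)}_{\mathrm{LD}}(x)>0$.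
   Context: In the paper, $I^{(1)}_{\mathrm{LD}}$ is the large deviation rate function (speed $t$) of $Y(t)/t$, where $Y(t)=N_{\nu,\lambda_1}(t)-N_{\nu,\lambda_2}(t)$ is a difference of two independent fractional Poisson processes with the same $\nu$, and $I^{(2)}_{\mathrm{LD}}$ is the rate function of $Z(t)/t$, where $Z(t)=S(L_\nu(t))$ with $S$ a difference of two independent Poisson processes with intensities $\lambda_1,\lambda_2$ and $L_\nu$ an independent inverse $\nu$-stable subordinator. The claim concerns only the functions defined explicitly above. *)

theory Defs
  imports "HOL-Analysis.Analysis"
begin

definition Psi1 :: "real \<Rightarrow> real \<Rightarrow> real \<Rightarrow> real \<Rightarrow> real" where
  "Psi1 \<nu> l1 l2 \<theta> =
     (if \<theta> \<ge> 0 then (l1 * (exp \<theta> - 1)) powr (1 / \<nu>)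
      else (l2 * (exp (-\<theta>) - 1)) powr (1 / \<nu>))"

definition Psi2 :: "real \<Rightarrow> real \<Rightarrow> real \<Rightarrow> real \<Rightarrow> real" where
  "Psi2 \<nu> l1 l2 \<theta> =
     (let g = l1 * (exp \<theta> - 1) + l2 * (exp (-\<theta>) - 1)
      in if g \<ge> 0 then g powr (1 / \<nu>) else 0)"

definition I_LD :: "(real \<Rightarrow> real) \<Rightarrow> real \<Rightarrow> ereal" where
  "I_LD \<Psi> x = (SUP \<theta>\<in>(UNIV::real set). ereal (\<theta> * x - \<Psi> \<theta>))"

end

theory Submission
  imports Defs
begin

lemma Psi1_nonneg: "Psi1 \<nu> l1 l2 t \<ge> 0"
  unfolding Psi1_def by simp

lemma Psi2_nonneg: "Psi2 \<nu> l1 l2 t \<ge> 0"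
  unfolding Psi2_def Let_def by simp

lemma Psi1_0: "Psi1 \<nu> l1 l2 0 = 0"
  unfolding Psi1_def by simp

lemma Psi2_0: "Psi2 \<nu> l1 l2 0 = 0"
  unfolding Psi2_def Let_def by simp

lemma I_LD_0:
  assumes "\<And>t. \<Psi> t \<ge> 0" "\<Psi> 0 = 0"
  shows "I_LD \<Psi> 0 = 0"
proof (rule antisym)
  show "I_LD \<Psi> 0 \<le> 0" unfolding I_LD_def
    by (rule SUP_least) (use assms(1) in auto)
  have "ereal (0 * 0 - \<Psi> 0) \<le> I_LD \<Psi> 0" unfolding I_LD_def
    by (rule SUP_upper) auto
  then show "0 \<le> I_LD \<Psi> 0" using assms(2) by (simp add: zero_ereal_def)
qed

lemma Psi1_sym: "Psi1 \<nu> l1 l2 (-t) = Psi1 \<nu> l2 l1 t"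
  unfolding Psi1_def by auto

lemma Psi2_sym: "Psi2 \<nu> l1 l2 (-t) = Psi2 \<nu> l2 l1 t"
  unfolding Psi2_def Let_def by (simp add: add.commute)

lemma I_LD_sym:
  assumes "\<And>t. \<Psi> (-t) = \<Phi> t"
  shows "I_LD \<Psi> (-x) = I_LD \<Phi> x"
proof -
  have u: "uminus ` (UNIV::real set) = UNIV" by (metis surjI minus_minus)
  have "I_LD \<Psi> (-x) = (SUP t\<in>uminus ` UNIV. ereal (t * (-x) - \<Psi> t))"
    unfolding I_LD_def by (simp only: u) 
  also have "\<dots> = (SUP t\<in>UNIV. ereal ((-t) * (-x) - \<Psi> (-t)))"
    by (simp only: image_image)
  also have "\<dots> = I_LD \<Phi> x" unfolding I_LD_def using assms by simp
  finally show ?thesis .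
qed

lemma Psi2_lt_Psi1:
  assumes "l1 > 0" "l2 > 0" "\<nu> > 0" "t \<noteq> 0"
  shows "Psi2 \<nu> l1 l2 t < Psi1 \<nu> l1 l2 t"
proof (cases "t > 0")
  case True
  let ?a = "l1 * (exp t - 1)"
  let ?g = "l1 * (exp t - 1) + l2 * (exp (-t) - 1)"
  have a: "?a > 0" using True assms by simp
  have "exp (-t) < 1" using True by simp
  hence g: "?g < ?a" using assms by (simp add: mult_less_0_iff)
  have p: "1 / \<nu> > 0" using assms by simp
  show ?thesis
  proof (cases "?g \<ge> 0")
    case True
    then show ?thesis using \<open>t > 0\<close> g p unfolding Psi1_def Psi2_def Let_def
      by (simp add: powr_less_mono2)
  next
    case False
    then show ?thesis using \<open>t > 0\<close> a assms unfolding Psi1_def Psi2_def Let_def by simp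
  qed
next
  case False
  hence t: "t < 0" using assms by simp
  let ?a = "l2 * (exp (-t) - 1)"
  let ?g = "l1 * (exp t - 1) + l2 * (exp (-t) - 1)"
  have a: "?a > 0" using t assms by simp
  have "exp t < 1" using t by simp
  hence g: "?g < ?a" using assms by (simp add: mult_less_0_iff)
  have p: "1 / \<nu> > 0" using assms by simp
  show ?thesis
  proof (cases "?g \<ge> 0")
    case True
    then show ?thesis using t g p unfolding Psi1_def Psi2_def Let_def
      by (simp add: powr_less_mono2)
  next
    case False
    then show ?thesis using t a assms unfolding Psi1_def Psi2_def Let_def by simp
  qed
qed


lemma exp_quad: "t \<ge> 0 \<Longrightarrow> 1 + t + t^2/4 \<le> exp (t::real)"
proof -
  assume t: "t \<ge> 0"
  have "1 + t/2 \<le> exp (t/2)" by (rule exp_ge_add_one_self)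
  hence "(1 + t/2)^2 \<le> (exp (t/2))^2" using t by (intro power_mono) auto
  also have "(exp (t/2))^2 = exp t" by (simp add: power2_eq_square flip: exp_add)
  finally show ?thesis by (simp add: power2_eq_square field_simps)
qed

lemma main_pos:
  fixes l1 l2 \<nu> x :: real
  assumes l1: "l1 > 0" and l2: "l2 > 0" and nu: "0 < \<nu>" "\<nu> < 1" and x: "x > 0"
  shows "I_LD (Psi1 \<nu> l1 l2) x > 0 \<and> I_LD (Psi2 \<nu> l1 l2) x > I_LD (Psi1 \<nu> l1 l2) x"
proof -
  define p where "p = 1 / \<nu>"
  have p1: "p > 1" using nu by (simp add: p_def)
  define f where "f t = t * x - Psi1 \<nu> l1 l2 t" for t
  have fpos: "t \<ge> 0 \<Longrightarrow> f t = t * x - (l1 * (exp t - 1)) powr p" for t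
    by (simp add: f_def Psi1_def p_def)
  define c where "c = 2 * l1"
  have c: "c > 0" using l1 by (simp add: c_def)
  define q where "q = x / (2 * c powr p)"
  have q: "q > 0" using x c by (simp add: q_def)
  define t0 where "t0 = min 1 (q powr (1 / (p - 1)))"
  have t0: "t0 > 0" "t0 \<le> 1" using q p1 by (auto simp: t0_def)
  have "t0 powr (p - 1) \<le> (q powr (1 / (p - 1))) powr (p - 1)"
    using t0 p1 by (intro powr_mono2) (auto simp: t0_def)
  also have "\<dots> = q" using p1 q by (simp add: powr_powr)
  finally have t0q: "t0 powr (p - 1) \<le> q" .
  have ft0: "f t0 > 0"
  proof -
    have "exp t0 \<le> 1 + t0 + t0^2" using t0 by (intro exp_bound) auto
    also have "t0^2 \<le> t0" using t0 by (simp add: power2_eq_square mult_le_cancel_left1)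
    finally have e: "exp t0 - 1 \<le> 2 * t0" by simp
    have "(l1 * (exp t0 - 1)) powr p \<le> (c * t0) powr p"
      using e l1 t0 p1 by (intro powr_mono2) (auto simp: c_def)
    also have "\<dots> = c powr p * (t0 powr (p - 1) * t0)"
    proof -
      have "t0 powr p = t0 powr (p - 1) * t0 powr 1" by (simp only: flip: powr_add) simp
      thus ?thesis using t0 c by (simp add: powr_mult)
    qed
    also have "\<dots> \<le> c powr p * (q * t0)"
      using t0q t0 by (intro mult_left_mono mult_right_mono) auto
    also have "\<dots> = x * t0 / 2" using c by (simp add: q_def)
    also have "\<dots> < t0 * x" using x t0 by simp
    finally show ?thesis using fpos[of t0] t0 by simp
  qed
  define M where "M = 1 / l1 + 4 * x / l1 + 1"
  have M1: "M \<ge> 1" using l1 x by (simp add: M_def)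
  have fM: "f t < 0" if t: "t > M" for t
  proof -
    have a: "1 / l1 > 0" "4 * x / l1 > 0" using l1 x by auto
    have tt: "1 / l1 + 4 * x / l1 + 1 < t" using t by (simp add: M_def)
    have t1: "t \<ge> 1 / l1" and t2: "t > 4 * x / l1" using a tt by linarith+
    have tpos: "t > 0" using t M1 by simp
    have e1: "exp t - 1 \<ge> t + t^2/4" using exp_quad[of t] tpos by simp
    define b where "b = l1 * (exp t - 1)"
    have "t^2/4 \<ge> 0" by simp
    hence "exp t - 1 \<ge> t" using e1 by linarith
    hence "b \<ge> l1 * t" using l1 unfolding b_def
      by (intro mult_left_mono) auto
    moreover have "l1 * t \<ge> 1" using t1 l1 by (simp add: field_simps)
    ultimately have b1: "b \<ge> 1" by simp
    have "b \<ge> l1 * (t^2/4)" using e1 l1 tpos unfolding b_def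
      by (intro mult_left_mono) auto
    moreover have "l1 * (t^2/4) > t * x"
    proof -
      have "l1 * t > 4 * x" using t2 l1 by (simp add: field_simps)
      hence "(l1 * t) * t > (4 * x) * t" using tpos by simp
      thus ?thesis by (simp add: power2_eq_square algebra_simps)
    qed
    ultimately have "b > t * x" by simp
    moreover have "b powr p \<ge> b powr 1" using b1 p1 by (intro powr_mono) auto
    ultimately have "b powr p > t * x" using b1 by simp
    thus ?thesis using fpos[of t] tpos by (simp add: b_def)
  qed
  have cont: "continuous_on {0..M} f"
  proof -
    have "continuous_on {0..M} (\<lambda>t. t * x - (l1 * (exp t - 1)) powr p)"
      using p1 l1 by (intro continuous_intros continuous_on_powr') auto
    moreover have "\<And>t. t \<in> {0..M} \<Longrightarrow> f t = t * x - (l1 * (exp t - 1)) powr p"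
      using fpos by auto
    ultimately show ?thesis using continuous_on_cong by (metis (no_types, lifting))
  qed
  obtain ts where ts: "ts \<in> {0..M}" "\<And>y. y \<in> {0..M} \<Longrightarrow> f y \<le> f ts"
    using continuous_attains_sup[OF compact_Icc _ cont] M1 by auto
  have fts: "f ts > 0" using ts(2)[of t0] t0 M1 ft0 by auto
  have ts0: "ts \<noteq> 0" using fts by (auto simp: f_def Psi1_0)
  have fle: "f t \<le> f ts" for t
  proof (cases "t < 0")
    case True
    then have "f t \<le> t * x" using Psi1_nonneg[of \<nu> l1 l2 t] by (simp add: f_def)
    also have "\<dots> < 0" using True x by (simp add: mult_neg_pos)
    finally show ?thesis using fts by simp
  next
    case False
    show ?thesis
    proof (cases "t > M")
      case True then show ?thesis using fM[OF True] fts by simp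
    next
      case False2: False
      then show ?thesis using ts(2)[of t] False by auto
    qed
  qed
  have I1: "I_LD (Psi1 \<nu> l1 l2) x = ereal (f ts)"
  proof (rule antisym)
    show "I_LD (Psi1 \<nu> l1 l2) x \<le> ereal (f ts)" unfolding I_LD_def
      by (rule SUP_least) (use fle in \<open>auto simp: f_def\<close>)
    show "ereal (f ts) \<le> I_LD (Psi1 \<nu> l1 l2) x" unfolding I_LD_def f_def
      by (rule SUP_upper) auto
  qed
  have "ereal (f ts) < ereal (ts * x - Psi2 \<nu> l1 l2 ts)"
    using Psi2_lt_Psi1[OF l1 l2 nu(1) ts0] by (simp add: f_def)
  also have "\<dots> \<le> I_LD (Psi2 \<nu> l1 l2) x" unfolding I_LD_def
    by (rule SUP_upper) auto
  finally show ?thesis using I1 fts by simp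
qed

theorem proposition5p2:
  fixes l1 l2 \<nu> :: real
  assumes "l1 > 0" and "l2 > 0" and "0 < \<nu>" and "\<nu> < 1"
  shows "I_LD (Psi1 \<nu> l1 l2) 0 = 0 \<and> I_LD (Psi2 \<nu> l1 l2) 0 = 0 \<and>
         (\<forall>x::real. x \<noteq> 0 \<longrightarrow>
            I_LD (Psi2 \<nu> l1 l2) x > I_LD (Psi1 \<nu> l1 l2) x \<and> I_LD (Psi1 \<nu> l1 l2) x > 0)"
proof (intro conjI allI impI)
  show "I_LD (Psi1 \<nu> l1 l2) 0 = 0" by (rule I_LD_0) (auto simp: Psi1_nonneg Psi1_0)
  show "I_LD (Psi2 \<nu> l1 l2) 0 = 0" by (rule I_LD_0) (auto simp: Psi2_nonneg Psi2_0)
  fix x :: real assume "x \<noteq> 0"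
  have "I_LD (Psi1 \<nu> l1 l2) x > 0 \<and> I_LD (Psi2 \<nu> l1 l2) x > I_LD (Psi1 \<nu> l1 l2) x"
  proof (cases "x > 0")
    case True then show ?thesis using main_pos assms by blast
  next
    case False
    hence "-x > 0" using \<open>x \<noteq> 0\<close> by simp
    from main_pos[OF assms(2,1,3,4) this]
    have "I_LD (Psi1 \<nu> l2 l1) (-x) > 0 \<and> I_LD (Psi2 \<nu> l2 l1) (-x) > I_LD (Psi1 \<nu> l2 l1) (-x)" .
    moreover have "I_LD (Psi1 \<nu> l2 l1) (-x) = I_LD (Psi1 \<nu> l1 l2) x"
      by (rule I_LD_sym) (rule Psi1_sym)
    moreover have "I_LD (Psi2 \<nu> l2 l1) (-x) = I_LD (Psi2 \<nu> l1 l2) x"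
      by (rule I_LD_sym) (rule Psi2_sym)
    ultimately show ?thesis by simp
  qed
  thus "I_LD (Psi2 \<nu> l1 l2) x > I_LD (Psi1 \<nu> l1 l2) x" "I_LD (Psi1 \<nu> l1 l2) x > 0" by auto
qed

end
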